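(* For $\vec a\in\mathcal M$, $\vec\xi\in T_{\vec a}\mathcal M$ and $\vec\omega\in\mathcal H\times\mathcal H$, the map $C_{\vec\xi}$ satisfies $C_{\vec\xi}(\vec\omega)=\vec\xi\circ\eta(\vec\omega)$.
   Context: Fix $m\ge1$, positive integers $n_0,\dots,n_m$, nonzero integers $d_1,\dots,d_m$; $D_1,\dots,D_m\subset\mathbb C$ pairwise disjoint closed disks, $\gamma_i=\partial D_i$ positively oriented, $\mathbf D^{int}=\bigcup(D_i\setminus\gamma_i)$, $\mathbf D^{ext}=\mathbb P^1\setminus\bigcup D_i$; $\mathcal H$ = germs of functions holomorphic near $\bigcup\gamma_i$; $f=f_++f_-$, $f_+(z)=\frac1{2\pi\mathrm i}\sum_s\oint_{\gamma_s}\frac{f(p)}{p-z}dp$ ($z$ inside), $f_-=-(\text{same})$ ($z$ outside), $f_-(\infty)=0$. $\mathcal M$: pairs $\vec a=(a,\hat a)\in\mathcal H\times\mathcal H$, $a$ meromorphic on $\mathbf D^{ext}$, only pole $\infty$, $a=z^{n_0}+a_{n_0-2}z^{n_0-2}+\cdots$; $\hat a$ meromorphic on $\mathbf D^{int}$, only poles $\varphi_j\in D_j\setminus\gamma_j$, $\hat a=\hat a_{j,-n_j}(z-\varphi_j)^{-n_j}+\cdots$, $\hat a_{j,-n_j}\ne0$; $a-\hat a=w_j^{d_j}$ on $\gamma_j$, $w_j$ holomorphic near $\gamma_j$, $w_j'\ne0$, $w_j(\gamma_j)$ winding once about $0$. Tangent vectors $X\leftrightarrow(\partial_Xa,\partial_X\hat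 a)$; $'=\partial_z$. $\eta(\omega,\hat\omega)=(a'(\omega+\hat\omega)_--(\omega a'+\hat\omega\hat a')_-,-\hat a'(\omega+\hat\omega)_++(\omega a'+\hat\omega\hat a')_+)$ (surjective onto $T_{\vec a}\mathcal M$). Product on $\mathcal H\times\mathcal H$: $(\omega_1,\hat\omega_1)\circ(\omega_2,\hat\omega_2)=(\omega_2(\omega_1a')_+-\omega_1(\omega_2a')_--\omega_2(\hat\omega_1\hat a')_--\omega_1(\hat\omega_2\hat a')_-,\ \hat\omega_2(\hat\omega_1\hat a')_+-\hat\omega_1(\hat\omega_2\hat a')_-+\hat\omega_1(\omega_2a')_++\hat\omega_2(\omega_1a')_+)$; product on $T_{\vec a}\mathcal M$: $\vec\xi_1\circ\vec\xi_2=\eta(\vec\omega_1\circ\vec\omega_2)$ for any $\vec\omega_\nu$ with $\eta(\vec\omega_\nu)=\vec\xi_\nu$. For $\vec\xi=(\xi,\hat\xi)$: $C_{\vec\xi}(\omega,\hat\omega)=\big(a'(\omega\xi+\hat\omega\hat\xi)_--\xi(\omega a'+\hat\omega\hat a')_-,\ -\hat a'(\omega\xi+\hat\omega\hat\xi)_++\hat\xi(\omega a'+\hat\omega\hat a')_+\big)$. *)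

theory Defs
  imports "HOL-Complex_Analysis.Complex_Analysis" "HOL-Library.Landau_Symbols"
begin

definition Gam :: "nat \<Rightarrow> (nat \<Rightarrow> complex) \<Rightarrow> (nat \<Rightarrow> real) \<Rightarrow> complex set" where
  "Gam m c r = (\<Union>s\<in>{1..m}. sphere (c s) (r s))"

definition Dint :: "nat \<Rightarrow> (nat \<Rightarrow> complex) \<Rightarrow> (nat \<Rightarrow> real) \<Rightarrow> complex set" where
  "Dint m c r = (\<Union>s\<in>{1..m}. ball (c s) (r s))"

definition Dext :: "nat \<Rightarrow> (nat \<Rightarrow> complex) \<Rightarrow> (nat \<Rightarrow> real) \<Rightarrow> complex set" where
  "Dext m c r = - (\<Union>s\<in>{1..m}. cball (c s) (r s))"

definition inH :: "nat \<Rightarrow> (nat \<Rightarrow> complex) \<Rightarrow> (nat \<Rightarrow> real) \<Rightarrow> (complex \<Rightarrow> complex) \<Rightarrow> bool" where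
  "inH m c r f \<longleftrightarrow> (\<exists>U. open U \<and> Gam m c r \<subseteq> U \<and> f holomorphic_on U)"

definition germ_eq :: "nat \<Rightarrow> (nat \<Rightarrow> complex) \<Rightarrow> (nat \<Rightarrow> real) \<Rightarrow>
    (complex \<Rightarrow> complex) \<Rightarrow> (complex \<Rightarrow> complex) \<Rightarrow> bool" where
  "germ_eq m c r f g \<longleftrightarrow> (\<exists>U. open U \<and> Gam m c r \<subseteq> U \<and> (\<forall>z\<in>U. f z = g z))"

definition germ_eq2 :: "nat \<Rightarrow> (nat \<Rightarrow> complex) \<Rightarrow> (nat \<Rightarrow> real) \<Rightarrow>
    (complex \<Rightarrow> complex) \<times> (complex \<Rightarrow> complex) \<Rightarrow> (complex \<Rightarrow> complex) \<times> (complex \<Rightarrow> complex) \<Rightarrow> bool" where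
  "germ_eq2 m c r F G \<longleftrightarrow> germ_eq m c r (fst F) (fst G) \<and> germ_eq m c r (snd F) (snd G)"

definition CI :: "nat \<Rightarrow> (nat \<Rightarrow> complex) \<Rightarrow> (nat \<Rightarrow> real) \<Rightarrow> (complex \<Rightarrow> complex) \<Rightarrow> complex \<Rightarrow> complex" where
  "CI m c r f z = (1 / (2 * pi * \<i>)) *
      (\<Sum>s\<in>{1..m}. contour_integral (circlepath (c s) (r s)) (\<lambda>p. f p / (p - z)))"

text \<open>The projections f_+ and f_-, as germs near the circles: given by the Cauchy integral on
  their natural side, by the boundary limit on the circles, and by f = f_+ + f_- on the other side.\<close>
definition proj_plus :: "nat \<Rightarrow> (nat \<Rightarrow> complex) \<Rightarrow> (nat \<Rightarrow> real) \<Rightarrow> (complex \<Rightarrow> complex) \<Rightarrow> complex \<Rightarrow> complex" where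
  "proj_plus m c r f z =
     (if z \<in> Dint m c r then CI m c r f z
      else if z \<in> Gam m c r then Lim (at z within Dint m c r) (CI m c r f)
      else f z + CI m c r f z)"

definition proj_minus :: "nat \<Rightarrow> (nat \<Rightarrow> complex) \<Rightarrow> (nat \<Rightarrow> real) \<Rightarrow> (complex \<Rightarrow> complex) \<Rightarrow> complex \<Rightarrow> complex" where
  "proj_minus m c r f z =
     (if z \<in> Dext m c r then - CI m c r f z
      else if z \<in> Gam m c r then Lim (at z within Dext m c r) (\<lambda>w. - CI m c r f w)
      else f z - CI m c r f z)"

definition inM :: "nat \<Rightarrow> (nat \<Rightarrow> nat) \<Rightarrow> (nat \<Rightarrow> int) \<Rightarrow> (nat \<Rightarrow> complex) \<Rightarrow> (nat \<Rightarrow> real) \<Rightarrow>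
    (complex \<Rightarrow> complex) \<Rightarrow> (complex \<Rightarrow> complex) \<Rightarrow> bool" where
  "inM m n d c r a ah \<longleftrightarrow>
     (\<exists>U. open U \<and> - Dint m c r \<subseteq> U \<and> a holomorphic_on U) \<and>
     (\<lambda>z. a z - z ^ n 0) \<in> O[at_infinity](\<lambda>z. z powi (int (n 0) - 2)) \<and>
     (\<exists>\<phi>. (\<forall>j\<in>{1..m}. \<phi> j \<in> ball (c j) (r j)) \<and>
        (\<exists>U. open U \<and> (\<Union>j\<in>{1..m}. cball (c j) (r j)) \<subseteq> U \<and>
             ah holomorphic_on (U - \<phi> ` {1..m})) \<and>
        (\<forall>j\<in>{1..m}. \<exists>h e. e > 0 \<and> h holomorphic_on ball (\<phi> j) e \<and> h (\<phi> j) \<noteq> 0 \<and>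
             (\<forall>z\<in>ball (\<phi> j) e - {\<phi> j}. ah z = h z / (z - \<phi> j) ^ n j))) \<and>
     (\<forall>j\<in>{1..m}. \<exists>w V. open V \<and> sphere (c j) (r j) \<subseteq> V \<and> w holomorphic_on V \<and>
        (\<forall>z\<in>V. deriv w z \<noteq> 0 \<and> w z \<noteq> 0 \<and> a z - ah z = w z powi d j) \<and>
        winding_number (w \<circ> circlepath (c j) (r j)) 0 = 1)"

definition eta :: "nat \<Rightarrow> (nat \<Rightarrow> complex) \<Rightarrow> (nat \<Rightarrow> real) \<Rightarrow>
    (complex \<Rightarrow> complex) \<Rightarrow> (complex \<Rightarrow> complex) \<Rightarrow>
    (complex \<Rightarrow> complex) \<times> (complex \<Rightarrow> complex) \<Rightarrow> (complex \<Rightarrow> complex) \<times> (complex \<Rightarrow> complex)" where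
  "eta m c r a ah W =
     (let w = fst W; wh = snd W;
          s = (\<lambda>z. w z + wh z); t = (\<lambda>z. w z * deriv a z + wh z * deriv ah z)
      in (\<lambda>z. deriv a z * proj_minus m c r s z - proj_minus m c r t z,
          \<lambda>z. - deriv ah z * proj_plus m c r s z + proj_plus m c r t z))"

definition prodH :: "nat \<Rightarrow> (nat \<Rightarrow> complex) \<Rightarrow> (nat \<Rightarrow> real) \<Rightarrow>
    (complex \<Rightarrow> complex) \<Rightarrow> (complex \<Rightarrow> complex) \<Rightarrow>
    (complex \<Rightarrow> complex) \<times> (complex \<Rightarrow> complex) \<Rightarrow> (complex \<Rightarrow> complex) \<times> (complex \<Rightarrow> complex) \<Rightarrow>
    (complex \<Rightarrow> complex) \<times> (complex \<Rightarrow> complex)" where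
  "prodH m c r a ah W1 W2 =
     (let w1 = fst W1; wh1 = snd W1; w2 = fst W2; wh2 = snd W2;
          P = proj_plus m c r; Q = proj_minus m c r
      in (\<lambda>z. w2 z * P (\<lambda>p. w1 p * deriv a p) z - w1 z * Q (\<lambda>p. w2 p * deriv a p) z
              - w2 z * Q (\<lambda>p. wh1 p * deriv ah p) z - w1 z * Q (\<lambda>p. wh2 p * deriv ah p) z,
          \<lambda>z. wh2 z * P (\<lambda>p. wh1 p * deriv ah p) z - wh1 z * Q (\<lambda>p. wh2 p * deriv ah p) z
              + wh1 z * P (\<lambda>p. w2 p * deriv a p) z + wh2 z * P (\<lambda>p. w1 p * deriv a p) z))"

definition Cxi :: "nat \<Rightarrow> (nat \<Rightarrow> complex) \<Rightarrow> (nat \<Rightarrow> real) \<Rightarrow>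
    (complex \<Rightarrow> complex) \<Rightarrow> (complex \<Rightarrow> complex) \<Rightarrow>
    (complex \<Rightarrow> complex) \<times> (complex \<Rightarrow> complex) \<Rightarrow> (complex \<Rightarrow> complex) \<times> (complex \<Rightarrow> complex) \<Rightarrow>
    (complex \<Rightarrow> complex) \<times> (complex \<Rightarrow> complex)" where
  "Cxi m c r a ah X W =
     (let x = fst X; xh = snd X; w = fst W; wh = snd W;
          s = (\<lambda>z. w z * x z + wh z * xh z); t = (\<lambda>z. w z * deriv a z + wh z * deriv ah z)
      in (\<lambda>z. deriv a z * proj_minus m c r s z - x z * proj_minus m c r t z,
          \<lambda>z. - deriv ah z * proj_plus m c r s z + xh z * proj_plus m c r t z))"

end

theory Submission
  imports Defs
begin

lemma ci_hol:
  assumes "continuous_on (sphere z \<rho>) f" "\<rho> > 0"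
  shows "(\<lambda>w. contour_integral (circlepath z \<rho>) (\<lambda>u. f u / (u - w))) holomorphic_on (- sphere z \<rho>)"
proof -
  have "(\<lambda>w. contour_integral (circlepath z \<rho>) (\<lambda>u. f u / (u - w))) field_differentiable at w"
    if w: "w \<in> - sphere z \<rho>" for w
  proof -
    have int: "((\<lambda>u. f u / (u - w') ^ 1) has_contour_integral
                contour_integral (circlepath z \<rho>) (\<lambda>u. f u / (u - w'))) (circlepath z \<rho>)"
      if "w' \<in> UNIV - path_image (circlepath z \<rho>)" for w'
    proof -
      have "continuous_on (path_image (circlepath z \<rho>)) (\<lambda>u. f u / (u - w'))"
        using that assms by (auto intro!: continuous_intros)
      then show ?thesis
        using has_contour_integral_integral[OF contour_integrable_continuous_circlepath] by simp
    qed
    have "((\<lambda>w. contour_integral (circlepath z \<rho>) (\<lambda>u. f u / (u - w))) has_field_derivative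
       (of_nat 1 * contour_integral (circlepath z \<rho>) (\<lambda>u. f u / (u - w) ^ Suc 1))) (at w)"
      by (rule Cauchy_next_derivative(2)[where S=UNIV and B="2*pi*\<bar>\<rho>\<bar>" and k=1, OF _ _ int])
         (use assms w in \<open>auto simp: vector_derivative_circlepath norm_mult\<close>)
    then show ?thesis unfolding field_differentiable_def by blast
  qed
  then show ?thesis
    by (simp add: holomorphic_on_open open_Compl[OF closed_sphere] field_differentiable_def)
qed

lemma circ_homotopic:
  assumes "0 < \<rho>1" "\<rho>1 \<le> \<rho>2" "\<And>p. \<rho>1 \<le> norm (p - c) \<Longrightarrow> norm (p - c) \<le> \<rho>2 \<Longrightarrow> p \<in> S"
  shows "homotopic_loops S (circlepath c \<rho>1) (circlepath c \<rho>2)"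
proof (rule homotopic_loops_linear)
  fix t :: real assume t: "t \<in> {0..1}"
  define e where "e = exp (2 * of_real pi * \<i> * of_real t)"
  have ne: "norm e = 1" unfolding e_def by (simp add: norm_exp_eq_Re)
  show "closed_segment (circlepath c \<rho>1 t) (circlepath c \<rho>2 t) \<subseteq> S"
  proof
    fix x assume "x \<in> closed_segment (circlepath c \<rho>1 t) (circlepath c \<rho>2 t)"
    then obtain u where u: "0 \<le> u" "u \<le> 1" and x: "x = (1 - u) *\<^sub>R (c + \<rho>1 * e) + u *\<^sub>R (c + \<rho>2 * e)"
      unfolding closed_segment_def circlepath e_def by auto
    have "x - c = complex_of_real ((1 - u) * \<rho>1 + u * \<rho>2) * e"
      unfolding x by (simp add: scaleR_conv_of_real algebra_simps)
    have K0: "(1 - u) * \<rho>1 + u * \<rho>2 \<ge> 0" using u assms by simp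
    have "norm (x - c) = norm (complex_of_real ((1 - u) * \<rho>1 + u * \<rho>2)) * norm e"
      by (simp only: \<open>x - c = _\<close> norm_mult)
    then have nx: "norm (x - c) = (1 - u) * \<rho>1 + u * \<rho>2"
      using K0 ne by (simp only: norm_of_real) simp
    have m1: "u * (\<rho>2 - \<rho>1) \<ge> 0" "(1 - u) * (\<rho>2 - \<rho>1) \<ge> 0" using u assms(2) by simp_all
    have "(1 - u) * \<rho>1 + u * \<rho>2 \<ge> \<rho>1" using m1 by (simp add: algebra_simps)
    moreover have "(1 - u) * \<rho>1 + u * \<rho>2 \<le> \<rho>2" using m1 by (simp add: algebra_simps)
    ultimately show "x \<in> S" using assms(3) nx by auto
  qed
qed auto

lemma shift_inner:
  assumes U: "open U" "f holomorphic_on U" and r: "0 < \<rho>1" "\<rho>1 \<le> \<rho>2"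
    and ann: "\<And>p. \<rho>1 \<le> norm (p - c) \<Longrightarrow> norm (p - c) \<le> \<rho>2 \<Longrightarrow> p \<in> U"
    and z: "norm (z - c) < \<rho>1"
  shows "contour_integral (circlepath c \<rho>2) (\<lambda>p. f p / (p - z)) =
         contour_integral (circlepath c \<rho>1) (\<lambda>p. f p / (p - z))"
proof -
  have "homotopic_loops (U - {z}) (circlepath c \<rho>1) (circlepath c \<rho>2)"
    by (rule circ_homotopic) (use r ann z in auto)
  moreover have "(\<lambda>p. f p / (p - z)) holomorphic_on (U - {z})"
    using U by (auto intro!: holomorphic_intros elim: holomorphic_on_subset)
  ultimately show ?thesis
    using Cauchy_theorem_homotopic_loops[of "U - {z}"] U by (metis open_delete valid_path_circlepath)
qed

lemma shift_annulus:
  assumes U: "open U" "f holomorphic_on U" and r: "0 < \<rho>1" "\<rho>1 \<le> \<rho>2"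
    and ann: "\<And>p. \<rho>1 \<le> norm (p - c) \<Longrightarrow> norm (p - c) \<le> \<rho>2 \<Longrightarrow> p \<in> U"
    and z: "\<rho>1 < norm (z - c)" "norm (z - c) < \<rho>2"
  shows "contour_integral (circlepath c \<rho>2) (\<lambda>p. f p / (p - z)) =
         contour_integral (circlepath c \<rho>1) (\<lambda>p. f p / (p - z)) + 2 * of_real pi * \<i> * f z"
proof -
  define h where "h = (\<lambda>p. if p = z then deriv f z else (f p - f z) / (p - z))"
  have zU: "z \<in> U" using ann z by auto
  have hh: "h holomorphic_on U" unfolding h_def by (rule pole_lemma_open) (use U in auto)
  have eq: "contour_integral (circlepath c \<rho>1) h = contour_integral (circlepath c \<rho>2) h"
    by (rule Cauchy_theorem_homotopic_loops[OF circ_homotopic U(1) hh]) (use r ann in auto)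
  have fc: "continuous_on U f" using U holomorphic_on_imp_continuous_on by blast
  have int: "(\<lambda>p. f p / (p - z)) contour_integrable_on (circlepath c \<rho>)"
    if "\<rho> = \<rho>1 \<or> \<rho> = \<rho>2" for \<rho>
  proof (rule contour_integrable_continuous_circlepath)
    have sub: "sphere c \<rho> \<subseteq> U - {z}" using that ann z r by (auto simp: dist_norm norm_minus_commute)
    show "continuous_on (path_image (circlepath c \<rho>)) (\<lambda>p. f p / (p - z))"
      using that r sub by (auto intro!: continuous_intros continuous_on_subset[OF fc])
  qed
  have int1: "(\<lambda>p. 1 / (p - z)) contour_integrable_on (circlepath c \<rho>)"
    if "\<rho> = \<rho>1 \<or> \<rho> = \<rho>2" for \<rho>
  proof (rule contour_integrable_continuous_circlepath)
    have sub: "sphere c \<rho> \<subseteq> U - {z}" using that ann z r by (auto simp: dist_norm norm_minus_commute)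
    show "continuous_on (path_image (circlepath c \<rho>)) (\<lambda>p. 1 / (p - z))"
      using that r sub by (auto intro!: continuous_intros)
  qed
  have hsplit: "contour_integral (circlepath c \<rho>) h =
      contour_integral (circlepath c \<rho>) (\<lambda>p. f p / (p - z)) - f z * contour_integral (circlepath c \<rho>) (\<lambda>p. 1 / (p - z))"
    if "\<rho> = \<rho>1 \<or> \<rho> = \<rho>2" for \<rho>
  proof -
    have "contour_integral (circlepath c \<rho>) h = contour_integral (circlepath c \<rho>) (\<lambda>p. f p / (p - z) - f z * (1 / (p - z)))"
    proof (rule contour_integral_eq)
      fix p assume "p \<in> path_image (circlepath c \<rho>)"
      then have "p \<noteq> z" using that r z by (auto simp: dist_norm norm_minus_commute)
      then show "h p = f p / (p - z) - f z * (1 / (p - z))" unfolding h_def by (simp add: diff_divide_distrib)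
    qed
    also have "\<dots> = contour_integral (circlepath c \<rho>) (\<lambda>p. f p / (p - z)) - f z * contour_integral (circlepath c \<rho>) (\<lambda>p. 1 / (p - z))"
      using contour_integral_diff[OF int[OF that] contour_integrable_lmul[OF int1[OF that]]]
            contour_integral_lmul[OF int1[OF that], of "f z"] by simp
    finally show ?thesis .
  qed
  have i2: "contour_integral (circlepath c \<rho>2) (\<lambda>p. 1 / (p - z)) = 2 * of_real pi * \<i>"
    using Cauchy_integral_circlepath_simple[of "\<lambda>_. 1" c \<rho>2 z] z
    by (auto intro!: contour_integral_unique simp: norm_minus_commute)
  have i1: "contour_integral (circlepath c \<rho>1) (\<lambda>p. 1 / (p - z)) = 0"
  proof -
    have "((\<lambda>p. 1 / (p - z)) has_contour_integral 0) (circlepath c \<rho>1)"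
    proof (rule Cauchy_theorem_convex_simple[of _ "ball c (norm (z - c))"])
      show "(\<lambda>p. 1 / (p - z)) holomorphic_on ball c (norm (z - c))"
        by (auto intro!: holomorphic_intros simp: dist_norm norm_minus_commute)
      show "path_image (circlepath c \<rho>1) \<subseteq> ball c (norm (z - c))"
        using r z by (auto simp: dist_norm norm_minus_commute)
    qed auto
    then show ?thesis by (rule contour_integral_unique)
  qed
  show ?thesis using eq hsplit[of \<rho>1] hsplit[of \<rho>2] i1 i2 by (simp add: algebra_simps)
qed

lemma ci_decay:
  assumes "continuous_on (sphere c \<rho>) f" "\<rho> > 0"
  shows "((\<lambda>w. contour_integral (circlepath c \<rho>) (\<lambda>u. f u / (u - w))) \<longlongrightarrow> 0) at_infinity"
proof -
  have "compact (f ` sphere c \<rho>)" using assms compact_continuous_image compact_sphere by blast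
  then obtain B where B: "B > 0" "\<And>x. x \<in> sphere c \<rho> \<Longrightarrow> norm (f x) \<le> B"
    using compact_imp_bounded bounded_pos by (metis image_eqI)
  define K where "K = norm c + \<rho>"
  define M where "M = B * (2 * pi * \<rho>)"
  have M: "M > 0" using B assms unfolding M_def by simp
  have bnd: "norm (contour_integral (circlepath c \<rho>) (\<lambda>u. f u / (u - w))) \<le> M / (norm w - K)"
    if w: "norm w > K" for w
  proof -
    have D: "norm w - K > 0" using w by simp
    have pz: "norm (u - w) \<ge> norm w - K" if "u \<in> sphere c \<rho>" for u
    proof -
      have "norm u \<le> norm c + \<rho>" using that assms norm_triangle_ineq[of c "u - c"]
        by (auto simp: dist_norm norm_minus_commute)
      then show ?thesis using norm_triangle_ineq2[of w u] unfolding K_def by (simp add: norm_minus_commute)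
    qed
    have cont: "continuous_on (path_image (circlepath c \<rho>)) (\<lambda>u. f u / (u - w))"
    proof -
      have "u \<noteq> w" if "u \<in> sphere c \<rho>" for u using pz[OF that] D by auto
      then show ?thesis using assms by (auto intro!: continuous_intros)
    qed
    have "norm (contour_integral (circlepath c \<rho>) (\<lambda>u. f u / (u - w))) \<le> (B / (norm w - K)) * (2 * pi * \<rho>)"
    proof (rule has_contour_integral_bound_circlepath[OF has_contour_integral_integral[OF contour_integrable_continuous_circlepath[OF cont]]])
      show "0 \<le> B / (norm w - K)" using B D by simp
      show "0 < \<rho>" by fact
      fix x assume "norm (x - c) = \<rho>"
      then have xs: "x \<in> sphere c \<rho>" by (simp add: dist_norm norm_minus_commute)
      have "norm (f x / (x - w)) = norm (f x) / norm (x - w)" by (simp add: norm_divide)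
      also have "\<dots> \<le> B / (norm w - K)"
        using B(2)[OF xs] pz[OF xs] D B(1) by (simp add: frac_le)
      finally show "norm (f x / (x - w)) \<le> B / (norm w - K)" .
    qed
    then show ?thesis unfolding M_def by simp
  qed
  show ?thesis
  proof (rule tendstoI)
    fix e :: real assume e: "e > 0"
    show "\<forall>\<^sub>F w in at_infinity. dist (contour_integral (circlepath c \<rho>) (\<lambda>u. f u / (u - w))) 0 < e"
      unfolding eventually_at_infinity
    proof (intro exI allI impI)
      fix w :: complex assume w: "K + M / e + 1 \<le> norm w"
      have pos: "M / e > 0" using M e by simp
      then have wK: "norm w > K" using w by simp
      have "M / (norm w - K) < e"
      proof -
        have "M < e * (norm w - K)"
        proof -
          have "M = e * (M / e)" using e by simp
          also have "\<dots> < e * (norm w - K)" using e w by (intro mult_strict_left_mono) auto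
          finally show ?thesis .
        qed
        then show ?thesis using wK by (simp add: divide_less_eq mult.commute)
      qed
      then show "dist (contour_integral (circlepath c \<rho>) (\<lambda>u. f u / (u - w))) 0 < e"
        using bnd[OF wK] by simp
    qed
  qed
qed

lemma fd_transform:
  assumes "g holomorphic_on S" "open S" "z \<in> S" "\<And>w. w \<in> S \<Longrightarrow> f w = g w"
  shows "f field_differentiable at z"
proof -
  have "f holomorphic_on S" using holomorphic_transform[OF assms(1)] assms(4) by metis
  then show ?thesis using assms(2,3) holomorphic_on_imp_differentiable_at by blast
qed

locale circ =
  fixes m :: nat and c :: "nat \<Rightarrow> complex" and r :: "nat \<Rightarrow> real"
  assumes rpos: "\<forall>j\<in>{1..m}. r j > 0"
    and disj: "\<forall>i\<in>{1..m}. \<forall>j\<in>{1..m}. i \<noteq> j \<longrightarrow> cball (c i) (r i) \<inter> cball (c j) (r j) = {}"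
begin

lemma sep:
  assumes "s \<in> {1..m}" "t \<in> {1..m}" "s \<noteq> t"
  shows "r s + r t < dist (c s) (c t)"
proof (rule ccontr)
  assume H: "\<not> ?thesis"
  have rs: "r s > 0" "r t > 0" using rpos assms by auto
  define l where "l = r s / (r s + r t)"
  define p where "p = c s + of_real l * (c t - c s)"
  have l: "0 \<le> l" "l \<le> 1" "1 - l = r t / (r s + r t)" using rs unfolding l_def by (auto simp: field_simps)
  have "dist (c s) p = l * dist (c s) (c t)"
    unfolding p_def using l by (simp add: dist_norm norm_mult norm_minus_commute)
  also have "\<dots> \<le> l * (r s + r t)" using H l by (intro mult_left_mono) auto
  also have "\<dots> = r s" unfolding l_def using rs by simp
  finally have p1: "p \<in> cball (c s) (r s)" by simp
  have eq: "p - c t = of_real (1 - l) * (c s - c t)" unfolding p_def by (simp add: algebra_simps)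
  have "dist (c t) p = norm (p - c t)" by (simp add: dist_norm norm_minus_commute)
  also have "\<dots> = norm (of_real (1 - l) * (c s - c t))" by (simp only: eq)
  also have "\<dots> = (1 - l) * dist (c s) (c t)"
    by (simp only: norm_mult norm_of_real dist_norm) (use l(1,2) in simp)
  also have "\<dots> \<le> (1 - l) * (r s + r t)" using H l by (intro mult_left_mono) auto
  also have "\<dots> = r t" unfolding l(3) using rs by simp
  finally have p2: "p \<in> cball (c t) (r t)" by simp
  show False using disj assms p1 p2 by blast
qed

lemma compact_Gam: "compact (Gam m c r)"
  unfolding Gam_def by (intro compact_UN) auto

lemma open_Dint: "open (Dint m c r)" unfolding Dint_def by auto
lemma open_Dext: "open (Dext m c r)" unfolding Dext_def
  by (intro open_Compl closed_UN) auto

lemma CI_hol: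
  assumes "continuous_on (Gam m c r) f"
  shows "CI m c r f holomorphic_on (- Gam m c r)"
proof -
  have "(\<lambda>z. contour_integral (circlepath (c t) (r t)) (\<lambda>p. f p / (p - z))) holomorphic_on (- Gam m c r)"
    if t: "t \<in> {1..m}" for t
  proof (rule holomorphic_on_subset[OF ci_hol])
    show "continuous_on (sphere (c t) (r t)) f"
      by (rule continuous_on_subset[OF assms]) (use t in \<open>auto simp: Gam_def\<close>)
    show "r t > 0" using rpos t by auto
    show "- Gam m c r \<subseteq> - sphere (c t) (r t)" using t by (auto simp: Gam_def)
  qed
  then show ?thesis unfolding CI_def[abs_def]
    by (intro holomorphic_intros holomorphic_on_sum) auto
qed

lemma CI_decay:
  assumes "continuous_on (Gam m c r) f"
  shows "(CI m c r f \<longlongrightarrow> 0) at_infinity"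
proof -
  have "((\<lambda>z. contour_integral (circlepath (c t) (r t)) (\<lambda>p. f p / (p - z))) \<longlongrightarrow> 0) at_infinity"
    if t: "t \<in> {1..m}" for t
  proof (rule ci_decay)
    show "continuous_on (sphere (c t) (r t)) f"
      by (rule continuous_on_subset[OF assms]) (use t in \<open>auto simp: Gam_def\<close>)
    show "r t > 0" using rpos t by auto
  qed
  then have "((\<lambda>z. \<Sum>t\<in>{1..m}. contour_integral (circlepath (c t) (r t)) (\<lambda>p. f p / (p - z))) \<longlongrightarrow> 0) at_infinity"
    using tendsto_sum[of "{1..m}"] by fastforce
  then show ?thesis unfolding CI_def[abs_def] by (intro tendsto_mult_right_zero)
qed

end

context circ begin

lemma ext:
  assumes U: "open U" "Gam m c r \<subseteq> U" "f holomorphic_on U"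
  shows "\<exists>W1 W2 V. open W1 \<and> (\<Union>j\<in>{1..m}. cball (c j) (r j)) \<subseteq> W1 \<and> proj_plus m c r f holomorphic_on W1 \<and>
     open W2 \<and> - Dint m c r \<subseteq> W2 \<and> proj_minus m c r f holomorphic_on W2 \<and>
     (proj_minus m c r f \<longlongrightarrow> 0) at_infinity \<and>
     open V \<and> Gam m c r \<subseteq> V \<and> V \<subseteq> U \<and> (\<forall>z\<in>V. proj_plus m c r f z + proj_minus m c r f z = f z)"
proof -
  let ?I = "{1..m}"
  obtain e0 where e0: "e0 > 0" "(\<Union>x\<in>Gam m c r. cball x e0) \<subseteq> U"
    using compact_subset_open_imp_cball_epsilon_subset[OF compact_Gam U(1,2)] by blast
  define Ds where "Ds = insert e0 (r ` ?I \<union> (\<lambda>(s,t). dist (c s) (c t) - r s - r t) ` {(s,t). s \<in> ?I \<and> t \<in> ?I \<and> s \<noteq> t})"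
  have "finite {(s,t). s \<in> ?I \<and> t \<in> ?I \<and> s \<noteq> t}" by (rule finite_subset[of _ "?I \<times> ?I"]) auto
  then have finDs: "finite Ds" unfolding Ds_def by simp
  have posDs: "\<forall>a\<in>Ds. 0 < a"
  proof -
    have "0 < dist (c s) (c t) - r s - r t" if "s \<in> ?I" "t \<in> ?I" "s \<noteq> t" for s t
      using sep[OF that] by simp
    then show ?thesis unfolding Ds_def using e0 rpos by auto
  qed
  have MinDs: "0 < Min Ds" using Min_gr_iff[OF finDs] posDs Ds_def by auto
  define \<epsilon> where "\<epsilon> = Min Ds / 3"
  have eps: "\<epsilon> > 0" unfolding \<epsilon>_def using MinDs by simp
  have eps_r: "\<epsilon> < r s" if "s \<in> ?I" for s
  proof -
    have "Min Ds \<le> r s" using that finDs by (intro Min_le) (auto simp: Ds_def)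
    then show ?thesis unfolding \<epsilon>_def using MinDs by simp
  qed
  have eps_e0: "\<epsilon> < e0"
  proof -
    have "Min Ds \<le> e0" using finDs by (intro Min_le) (auto simp: Ds_def)
    then show ?thesis unfolding \<epsilon>_def using MinDs by simp
  qed
  have eps_sep: "r s + r t + 2 * \<epsilon> < dist (c s) (c t)" if "s \<in> ?I" "t \<in> ?I" "s \<noteq> t" for s t
  proof -
    have "Min Ds \<le> dist (c s) (c t) - r s - r t" using that finDs by (intro Min_le) (auto simp: Ds_def)
    then show ?thesis unfolding \<epsilon>_def using MinDs by simp
  qed
  have rpos': "r s > 0" if "s \<in> ?I" for s using rpos that by auto
  have ann: "p \<in> U" if s: "s \<in> ?I" and p: "\<bar>dist (c s) p - r s\<bar> \<le> \<epsilon>" for s p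
  proof -
    have pc: "p \<noteq> c s" using p eps_r[OF s] by auto
    define x where "x = c s + of_real (r s / dist (c s) p) * (p - c s)"
    have dcp: "dist (c s) p > 0" using pc by simp
    have "dist (c s) x = r s"
      unfolding x_def using dcp rpos'[OF s]
      by (simp add: dist_norm norm_mult norm_divide norm_minus_commute)
    then have xG: "x \<in> Gam m c r" using s by (auto simp: Gam_def)
    have eq: "x - p = of_real (r s / dist (c s) p - 1) * (p - c s)" unfolding x_def by (simp add: algebra_simps)
    have "dist x p = norm (of_real (r s / dist (c s) p - 1) * (p - c s))" by (simp only: dist_norm eq)
    also have "\<dots> = \<bar>r s / dist (c s) p - 1\<bar> * dist (c s) p"
      by (simp only: norm_mult norm_of_real) (simp add: dist_norm norm_minus_commute)
    finally have "dist x p = \<bar>r s / dist (c s) p - 1\<bar> * dist (c s) p" .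
    also have "\<dots> = \<bar>(r s / dist (c s) p - 1) * dist (c s) p\<bar>"
      using dcp by (simp add: abs_mult)
    also have "(r s / dist (c s) p - 1) * dist (c s) p = r s - dist (c s) p"
      using dcp by (simp add: algebra_simps)
    finally have "dist x p \<le> e0" using p eps_e0 by simp
    then have "p \<in> cball x e0" by simp
    then show ?thesis using e0(2) xG by blast
  qed
  have far: "dist (c t) z > r t + \<epsilon>" if "s \<in> ?I" "t \<in> ?I" "t \<noteq> s" "dist (c s) z < r s + \<epsilon>" for s t z
    using eps_sep[of s t] that dist_triangle[of "c s" "c t" z] by (simp add: dist_commute)
  have inDint: "z \<in> Dint m c r \<longleftrightarrow> dist (c s) z < r s" if "s \<in> ?I" "dist (c s) z < r s + \<epsilon>" for s z
  proof
    assume "z \<in> Dint m c r"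
    then obtain j where j: "j \<in> ?I" "dist (c j) z < r j" unfolding Dint_def by auto
    show "dist (c s) z < r s"
    proof (cases "j = s")
      case False then show ?thesis using far[OF that(1) j(1) False that(2)] j eps by simp
    qed (use j in simp)
  qed (use that in \<open>auto simp: Dint_def\<close>)
  have inCB: "z \<in> (\<Union>j\<in>?I. cball (c j) (r j)) \<longleftrightarrow> dist (c s) z \<le> r s" if "s \<in> ?I" "dist (c s) z < r s + \<epsilon>" for s z
  proof
    assume "z \<in> (\<Union>j\<in>?I. cball (c j) (r j))"
    then obtain j where j: "j \<in> ?I" "dist (c j) z \<le> r j" by auto
    show "dist (c s) z \<le> r s"
    proof (cases "j = s")
      case False then show ?thesis using far[OF that(1) j(1) False that(2)] j eps by simp
    qed (use j in simp)
  qed (use that in auto)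
  have inGam: "z \<in> Gam m c r \<longleftrightarrow> dist (c s) z = r s" if "s \<in> ?I" "dist (c s) z < r s + \<epsilon>" for s z
  proof
    assume "z \<in> Gam m c r"
    then obtain j where j: "j \<in> ?I" "dist (c j) z = r j" unfolding Gam_def by auto
    show "dist (c s) z = r s"
    proof (cases "j = s")
      case False then show ?thesis using far[OF that(1) j(1) False that(2)] j eps by simp
    qed (use j in simp)
  qed (use that in \<open>auto simp: Gam_def\<close>)
  have inDext: "z \<in> Dext m c r \<longleftrightarrow> dist (c s) z > r s" if "s \<in> ?I" "dist (c s) z < r s + \<epsilon>" for s z
    using inCB[OF that] unfolding Dext_def by auto
  have fcont: "continuous_on U f" using U(3) holomorphic_on_imp_continuous_on by blast
  have fGam: "continuous_on (Gam m c r) f" using continuous_on_subset[OF fcont U(2)] .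
  have sphG: "sphere (c t) (r t) \<subseteq> Gam m c r" if "t \<in> ?I" for t using that by (auto simp: Gam_def)
  define T where "T = (\<lambda>t z. contour_integral (circlepath (c t) (r t)) (\<lambda>p. f p / (p - z)))"
  have CIeq: "CI m c r f z = (1/(2*pi*\<i>)) * (T s z + (\<Sum>t\<in>?I-{s}. T t z))" if "s \<in> ?I" for s z
    unfolding CI_def T_def using that by (simp add: sum.remove)
  define Gp where "Gp = (\<lambda>s z. (1/(2*pi*\<i>)) * (contour_integral (circlepath (c s) (r s + \<epsilon>)) (\<lambda>p. f p / (p - z)) + (\<Sum>t\<in>?I-{s}. T t z)))"
  define B where "B = (\<lambda>s. ball (c s) (r s + \<epsilon>))"
  have openB: "open (B s)" for s unfolding B_def by simp
  have Gp_hol: "Gp s holomorphic_on B s" if s: "s \<in> ?I" for s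
  proof -
    have h1: "(\<lambda>z. contour_integral (circlepath (c s) (r s + \<epsilon>)) (\<lambda>p. f p / (p - z))) holomorphic_on B s"
    proof (rule holomorphic_on_subset[OF ci_hol])
      show "continuous_on (sphere (c s) (r s + \<epsilon>)) f"
        by (rule continuous_on_subset[OF fcont]) (use ann[OF s] eps in auto)
      show "r s + \<epsilon> > 0" using rpos'[OF s] eps by simp
      show "B s \<subseteq> - sphere (c s) (r s + \<epsilon>)" unfolding B_def by auto
    qed
    have h2: "T t holomorphic_on B s" if t: "t \<in> ?I - {s}" for t
      unfolding T_def
    proof (rule holomorphic_on_subset[OF ci_hol])
      show "continuous_on (sphere (c t) (r t)) f"
        by (rule continuous_on_subset[OF fGam sphG]) (use t in auto)
      show "r t > 0" using rpos' t by simp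
      show "B s \<subseteq> - sphere (c t) (r t)"
        unfolding B_def using far[OF s, of t] t eps by fastforce
    qed
    show ?thesis unfolding Gp_def
      by (intro holomorphic_intros holomorphic_on_sum h1 h2)
  qed
  have annU: "\<And>p. r s \<le> norm (p - c s) \<Longrightarrow> norm (p - c s) \<le> r s + \<epsilon> \<Longrightarrow> p \<in> U" if s: "s \<in> ?I" for s
    using ann[OF s] by (simp add: dist_norm norm_minus_commute abs_le_iff)
  have case_in: "CI m c r f z = Gp s z" if s: "s \<in> ?I" and z: "dist (c s) z < r s" for s z
  proof -
    have "contour_integral (circlepath (c s) (r s + \<epsilon>)) (\<lambda>p. f p / (p - z)) = T s z"
      unfolding T_def
      by (rule shift_inner[OF U(1,3)]) (use rpos'[OF s] eps z annU[OF s] in \<open>auto simp: dist_norm norm_minus_commute\<close>)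
    then show ?thesis unfolding Gp_def CIeq[OF s] by simp
  qed
  have case_out: "f z + CI m c r f z = Gp s z" if s: "s \<in> ?I" and z: "r s < dist (c s) z" "dist (c s) z < r s + \<epsilon>" for s z
  proof -
    have "contour_integral (circlepath (c s) (r s + \<epsilon>)) (\<lambda>p. f p / (p - z)) = T s z + 2 * of_real pi * \<i> * f z"
      unfolding T_def
      by (rule shift_annulus[OF U(1,3)]) (use rpos'[OF s] eps z annU[OF s] in \<open>auto simp: dist_norm norm_minus_commute\<close>)
    then show ?thesis unfolding Gp_def CIeq[OF s] by (simp add: field_simps)
  qed
  have P_Gp: "proj_plus m c r f z = Gp s z" if s: "s \<in> ?I" and z: "z \<in> B s" for s z
  proof -
    have zB: "dist (c s) z < r s + \<epsilon>" using z unfolding B_def by simp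
    consider "dist (c s) z < r s" | "dist (c s) z > r s" | "dist (c s) z = r s" by linarith
    then show ?thesis
    proof cases
      case 1
      then show ?thesis using inDint[OF s zB] case_in[OF s] unfolding proj_plus_def by simp
    next
      case 2
      then show ?thesis using inDint[OF s zB] inGam[OF s zB] case_out[OF s 2 zB] unfolding proj_plus_def by simp
    next
      case 3
      have nD: "z \<notin> Dint m c r" and G: "z \<in> Gam m c r" using inDint[OF s zB] inGam[OF s zB] 3 by auto
      have "isCont (Gp s) z"
        using Gp_hol[OF s] openB z by (meson continuous_on_eq_continuous_at holomorphic_on_imp_continuous_on)
      then have "(Gp s \<longlongrightarrow> Gp s z) (at z within Dint m c r)"
        unfolding isCont_def by (rule tendsto_within_subset) simp
      then have lim: "(CI m c r f \<longlongrightarrow> Gp s z) (at z within Dint m c r)"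
      proof (rule Lim_transform_within[OF _ eps])
        fix x' assume x': "x' \<in> Dint m c r" "0 < dist x' z" "dist x' z < \<epsilon>"
        have "dist (c s) x' < r s + \<epsilon>" using x' 3 dist_triangle[of "c s" x' z] by (simp add: dist_commute)
        then have "dist (c s) x' < r s" using inDint[OF s] x' by blast
        then show "Gp s x' = CI m c r f x'" using case_in[OF s] by simp
      qed
      have "z islimpt ball (c s) (r s)" using 3 rpos'[OF s] by (simp add: islimpt_ball)
      then have "z islimpt Dint m c r" by (rule islimpt_subset) (use s in \<open>auto simp: Dint_def\<close>)
      then have "\<not> trivial_limit (at z within Dint m c r)" by (simp add: trivial_limit_within)
      then show ?thesis using tendsto_Lim[OF _ lim] nD G unfolding proj_plus_def by simp
    qed
  qed
  have DintG: "z \<notin> Gam m c r" if zD: "z \<in> Dint m c r" for z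
  proof
    assume "z \<in> Gam m c r"
    then obtain t where t: "t \<in> ?I" "dist (c t) z = r t" unfolding Gam_def by auto
    obtain s where s: "s \<in> ?I" "dist (c s) z < r s" using zD unfolding Dint_def by auto
    show False
    proof (cases "s = t")
      case True then show False using s t by simp
    next
      case False
      then have "z \<in> cball (c s) (r s) \<inter> cball (c t) (r t)" using s t by auto
      then show False using disj s t False by blast
    qed
  qed
  have DextD: "z \<notin> Dint m c r \<and> z \<notin> Gam m c r" if "z \<in> Dext m c r" for z
    using that unfolding Dext_def Dint_def Gam_def by auto
  define W1 where "W1 = Dint m c r \<union> (\<Union>s\<in>?I. B s)"
  have openW1: "open W1" unfolding W1_def using open_Dint openB by auto
  have CBW1: "(\<Union>j\<in>?I. cball (c j) (r j)) \<subseteq> W1" unfolding W1_def B_def using eps by fastforce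
  have CIhol: "CI m c r f holomorphic_on (- Gam m c r)" by (rule CI_hol[OF fGam])
  have Phol: "proj_plus m c r f holomorphic_on W1"
  proof -
    have "proj_plus m c r f field_differentiable at z" if z: "z \<in> W1" for z
    proof (cases "z \<in> Dint m c r")
      case True
      show ?thesis
      proof (rule fd_transform[OF _ open_Dint True])
        show "CI m c r f holomorphic_on Dint m c r" using holomorphic_on_subset[OF CIhol] DintG by blast
        show "proj_plus m c r f w = CI m c r f w" if "w \<in> Dint m c r" for w using that unfolding proj_plus_def by simp
      qed
    next
      case False
      then obtain s where s: "s \<in> ?I" "z \<in> B s" using z unfolding W1_def by auto
      show ?thesis by (rule fd_transform[OF Gp_hol[OF s(1)] openB s(2)]) (use P_Gp s in auto)
    qed
    then show ?thesis using openW1 by (simp add: holomorphic_on_open field_differentiable_def)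
  qed
  define V where "V = (\<Union>s\<in>?I. B s - cball (c s) (r s - \<epsilon>))"
  have openV: "open V" unfolding V_def B_def by auto
  have VU: "V \<subseteq> U"
  proof
    fix z assume "z \<in> V"
    then obtain s where s: "s \<in> ?I" "dist (c s) z < r s + \<epsilon>" "dist (c s) z > r s - \<epsilon>" unfolding V_def B_def by auto
    then show "z \<in> U" using ann[OF s(1), of z] by simp
  qed
  have VW1: "V \<subseteq> W1" unfolding V_def W1_def by auto
  have GV: "Gam m c r \<subseteq> V" unfolding V_def B_def Gam_def using eps by auto
  have fcont_at: "isCont f z" if "z \<in> U" for z
    using fcont U(1) that continuous_on_eq_continuous_at by blast
  have Pcont_at: "isCont (proj_plus m c r f) z" if "z \<in> W1" for z
    using Phol openW1 that by (meson continuous_on_eq_continuous_at holomorphic_on_imp_continuous_on)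
  have QP: "proj_minus m c r f z = f z - proj_plus m c r f z" if z: "z \<in> V" for z
  proof -
    obtain s where s: "s \<in> ?I" and zB: "dist (c s) z < r s + \<epsilon>" using z unfolding V_def B_def by auto
    consider "dist (c s) z < r s" | "dist (c s) z > r s" | "dist (c s) z = r s" by linarith
    then show ?thesis
    proof cases
      case 1
      then show ?thesis using inDint[OF s zB] inGam[OF s zB] inDext[OF s zB]
        unfolding proj_plus_def proj_minus_def by simp
    next
      case 2
      then show ?thesis using inDint[OF s zB] inGam[OF s zB] inDext[OF s zB]
        unfolding proj_plus_def proj_minus_def by simp
    next
      case 3
      have nD: "z \<notin> Dext m c r" and G: "z \<in> Gam m c r" using inDext[OF s zB] inGam[OF s zB] 3 by auto
      have "isCont (\<lambda>w. f w - proj_plus m c r f w) z"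
        using fcont_at Pcont_at z VU VW1 by (intro continuous_intros) auto
      then have "((\<lambda>w. f w - proj_plus m c r f w) \<longlongrightarrow> f z - proj_plus m c r f z) (at z within Dext m c r)"
        unfolding isCont_def by (rule tendsto_within_subset) simp
      then have lim: "((\<lambda>w. - CI m c r f w) \<longlongrightarrow> f z - proj_plus m c r f z) (at z within Dext m c r)"
      proof (rule Lim_transform_within[of _ _ _ _ 1])
        fix x' assume x': "x' \<in> Dext m c r"
        then show "f x' - proj_plus m c r f x' = - CI m c r f x'"
          using DextD[OF x'] unfolding proj_plus_def by simp
      qed simp
      have "z islimpt Dext m c r"
        unfolding islimpt_approachable
      proof (intro allI impI)
        fix e :: real assume e: "e > 0"
        define \<delta> where "\<delta> = min e \<epsilon> / 2"
        have \<delta>: "\<delta> > 0" "\<delta> < e" "\<delta> < \<epsilon>" unfolding \<delta>_def using e eps by auto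
        define x' where "x' = z + of_real (\<delta> / r s) * (z - c s)"
        have rs: "r s > 0" using rpos'[OF s] .
        have e1: "x' - c s = of_real (1 + \<delta> / r s) * (z - c s)" unfolding x'_def by (simp add: algebra_simps)
        have "dist (c s) x' = norm (of_real (1 + \<delta> / r s) * (z - c s))" by (simp only: dist_norm norm_minus_commute[of "c s"] e1)
        also have "\<dots> = (1 + \<delta> / r s) * r s"
          by (simp only: norm_mult norm_of_real) (use 3 \<delta> rs in \<open>simp add: dist_norm norm_minus_commute\<close>)
        also have "\<dots> = r s + \<delta>" using rs by (simp add: field_simps)
        finally have dx: "dist (c s) x' = r s + \<delta>" .
        have "dist x' z = norm (of_real (\<delta> / r s) * (z - c s))" unfolding x'_def by (simp add: dist_norm)
        also have "\<dots> = \<delta> / r s * r s"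
          by (simp only: norm_mult norm_of_real) (use 3 \<delta> rs in \<open>simp add: dist_norm norm_minus_commute\<close>)
        also have "\<dots> = \<delta>" using rs by simp
        finally have dz: "dist x' z = \<delta>" .
        have "x' \<in> Dext m c r" using inDext[OF s, of x'] dx \<delta> by simp
        moreover have "x' \<noteq> z" using dz \<delta> by auto
        ultimately show "\<exists>x'\<in>Dext m c r. x' \<noteq> z \<and> dist x' z < e" using dz \<delta> by blast
      qed
      then have "\<not> trivial_limit (at z within Dext m c r)" by (simp add: trivial_limit_within)
      then show ?thesis using tendsto_Lim[OF _ lim] nD G unfolding proj_minus_def by simp
    qed
  qed
  define W2 where "W2 = Dext m c r \<union> V"
  have openW2: "open W2" unfolding W2_def using open_Dext openV by auto
  have DW2: "- Dint m c r \<subseteq> W2"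
  proof
    fix z assume z: "z \<in> - Dint m c r"
    show "z \<in> W2"
    proof (cases "z \<in> Gam m c r")
      case True then show ?thesis using GV unfolding W2_def by auto
    next
      case False
      then have "z \<in> Dext m c r" using z unfolding Dext_def Dint_def Gam_def by (auto simp: le_less)
      then show ?thesis unfolding W2_def by auto
    qed
  qed
  have Qhol: "proj_minus m c r f holomorphic_on W2"
  proof -
    have "proj_minus m c r f field_differentiable at z" if z: "z \<in> W2" for z
    proof (cases "z \<in> Dext m c r")
      case True
      show ?thesis
      proof (rule fd_transform[OF _ open_Dext True])
        show "(\<lambda>w. - CI m c r f w) holomorphic_on Dext m c r"
          using holomorphic_on_subset[OF CIhol] DextD by (intro holomorphic_intros) blast
        show "proj_minus m c r f w = - CI m c r f w" if "w \<in> Dext m c r" for w using that unfolding proj_minus_def by simp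
      qed
    next
      case False
      then have zV: "z \<in> V" using z unfolding W2_def by auto
      show ?thesis
      proof (rule fd_transform[OF _ openV zV])
        show "(\<lambda>w. f w - proj_plus m c r f w) holomorphic_on V"
          using holomorphic_on_subset[OF U(3) VU] holomorphic_on_subset[OF Phol VW1] by (intro holomorphic_intros)
        show "proj_minus m c r f w = f w - proj_plus m c r f w" if "w \<in> V" for w using QP[OF that] .
      qed
    qed
    then show ?thesis using openW2 by (simp add: holomorphic_on_open field_differentiable_def)
  qed
  have Qlim: "(proj_minus m c r f \<longlongrightarrow> 0) at_infinity"
  proof -
    define R where "R = (\<Sum>j\<in>?I. norm (c j) + r j) + 1"
    have ev: "\<forall>\<^sub>F z in at_infinity. - CI m c r f z = proj_minus m c r f z"
      unfolding eventually_at_infinity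
    proof (intro exI allI impI)
      fix z :: complex assume z: "R \<le> norm z"
      have "z \<in> Dext m c r"
      proof -
        have "dist (c j) z > r j" if j: "j \<in> ?I" for j
        proof -
          have "norm (c j) + r j \<le> (\<Sum>j\<in>?I. norm (c j) + r j)"
            proof (rule member_le_sum)
            show "0 \<le> norm (c x) + r x" if "x \<in> ?I - {j}" for x
              using rpos'[of x] that by (simp add: add_nonneg_nonneg less_imp_le)
          qed (use j in auto)
          then have "norm z \<ge> norm (c j) + r j + 1" using z unfolding R_def by simp
          moreover have "dist (c j) z \<ge> norm z - norm (c j)"
            using norm_triangle_ineq2[of z "c j"] by (simp add: dist_norm norm_minus_commute)
          ultimately show ?thesis by simp
        qed
        then show ?thesis unfolding Dext_def by force
      qed
      then show "- CI m c r f z = proj_minus m c r f z" unfolding proj_minus_def by simp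
    qed
    have "((\<lambda>z. - CI m c r f z) \<longlongrightarrow> - 0) at_infinity"
      by (intro tendsto_minus CI_decay[OF fGam])
    then show ?thesis using Lim_transform_eventually[OF _ ev] by simp
  qed
  show ?thesis
  proof (intro exI conjI)
    show "open W1" "(\<Union>j\<in>?I. cball (c j) (r j)) \<subseteq> W1" "proj_plus m c r f holomorphic_on W1"
      by fact+
    show "open W2" "- Dint m c r \<subseteq> W2" "proj_minus m c r f holomorphic_on W2" "(proj_minus m c r f \<longlongrightarrow> 0) at_infinity"
      by fact+
    show "open V" "Gam m c r \<subseteq> V" "V \<subseteq> U" by fact+
    show "\<forall>z\<in>V. proj_plus m c r f z + proj_minus m c r f z = f z" using QP by simp
  qed
qed

end

context circ begin

definition gF :: "complex filter" where
  "gF = (INF U\<in>{U. open U \<and> Gam m c r \<subseteq> U}. principal U)"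

lemma ev_gF: "(\<forall>\<^sub>F z in gF. P z) \<longleftrightarrow> (\<exists>U. open U \<and> Gam m c r \<subseteq> U \<and> (\<forall>z\<in>U. P z))"
proof -
  have "(\<forall>\<^sub>F z in gF. P z) \<longleftrightarrow> (\<exists>U\<in>{U. open U \<and> Gam m c r \<subseteq> U}. eventually P (principal U))"
    unfolding gF_def
  proof (rule eventually_INF_base)
    show "{U. open U \<and> Gam m c r \<subseteq> U} \<noteq> {}" by auto
    fix a b assume "a \<in> {U. open U \<and> Gam m c r \<subseteq> U}" "b \<in> {U. open U \<and> Gam m c r \<subseteq> U}"
    then show "\<exists>x\<in>{U. open U \<and> Gam m c r \<subseteq> U}. principal x \<le> inf (principal a) (principal b)"
      by (intro bexI[of _ "a \<inter> b"]) auto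
  qed
  then show ?thesis by (auto simp: eventually_principal)
qed

lemma germ_iff: "germ_eq m c r f g \<longleftrightarrow> (\<forall>\<^sub>F z in gF. f z = g z)"
  unfolding germ_eq_def ev_gF ..

lemma Gam_Dint: "z \<in> Gam m c r \<Longrightarrow> z \<notin> Dint m c r"
proof
  assume zG: "z \<in> Gam m c r" and zD: "z \<in> Dint m c r"
  obtain t where t: "t \<in> {1..m}" "dist (c t) z = r t" using zG unfolding Gam_def by auto
  obtain s where s: "s \<in> {1..m}" "dist (c s) z < r s" using zD unfolding Dint_def by auto
  show False
  proof (cases "s = t")
    case True then show False using s t by simp
  next
    case False
    then have "z \<in> cball (c s) (r s) \<inter> cball (c t) (r t)" using s t by auto
    then show False using disj s t False by blast
  qed
qed

lemma Gam_CB: "Gam m c r \<subseteq> (\<Union>j\<in>{1..m}. cball (c j) (r j))"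
  unfolding Gam_def by auto

lemma ev_Dext: "\<forall>\<^sub>F z in at_infinity. z \<in> Dext m c r"
  unfolding eventually_at_infinity
proof (intro exI allI impI)
  define R where "R = (\<Sum>j\<in>{1..m}. norm (c j) + r j) + 1"
  fix z :: complex assume z: "R \<le> norm z"
  have "dist (c j) z > r j" if j: "j \<in> {1..m}" for j
  proof -
    have "norm (c j) + r j \<le> (\<Sum>j\<in>{1..m}. norm (c j) + r j)"
    proof (rule member_le_sum)
      show "0 \<le> norm (c x) + r x" if "x \<in> {1..m} - {j}" for x
        using rpos that by (simp add: add_nonneg_nonneg less_imp_le)
    qed (use j in auto)
    then have "norm z \<ge> norm (c j) + r j + 1" using z unfolding R_def by simp
    moreover have "dist (c j) z \<ge> norm z - norm (c j)"
      using norm_triangle_ineq2[of z "c j"] by (simp add: dist_norm norm_minus_commute)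
    ultimately show ?thesis by simp
  qed
  then show "z \<in> Dext m c r" unfolding Dext_def by force
qed

definition Hp :: "(complex \<Rightarrow> complex) \<Rightarrow> bool" where
  "Hp g \<longleftrightarrow> (\<exists>W. open W \<and> (\<Union>j\<in>{1..m}. cball (c j) (r j)) \<subseteq> W \<and> g holomorphic_on W)"
definition Hm :: "(complex \<Rightarrow> complex) \<Rightarrow> bool" where
  "Hm g \<longleftrightarrow> (\<exists>W. open W \<and> - Dint m c r \<subseteq> W \<and> g holomorphic_on W \<and> (g \<longlongrightarrow> 0) at_infinity)"

lemma Hp_H: "Hp g \<Longrightarrow> inH m c r g"
  unfolding Hp_def inH_def using Gam_CB by blast
lemma Hm_H: "Hm g \<Longrightarrow> inH m c r g"
  unfolding Hm_def inH_def using Gam_Dint by blast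

lemma Hp_add: "Hp f \<Longrightarrow> Hp g \<Longrightarrow> Hp (\<lambda>z. f z + g z)"
  unfolding Hp_def
  by (elim exE conjE, rule_tac x="W \<inter> Wa" in exI) (auto intro!: holomorphic_intros elim: holomorphic_on_subset)
lemma Hp_mult: "Hp f \<Longrightarrow> Hp g \<Longrightarrow> Hp (\<lambda>z. f z * g z)"
  unfolding Hp_def
  by (elim exE conjE, rule_tac x="W \<inter> Wa" in exI) (auto intro!: holomorphic_intros elim: holomorphic_on_subset)
lemma Hp_uminus: "Hp f \<Longrightarrow> Hp (\<lambda>z. - f z)"
  unfolding Hp_def by (auto intro!: holomorphic_intros)
lemma Hm_add: "Hm f \<Longrightarrow> Hm g \<Longrightarrow> Hm (\<lambda>z. f z + g z)"
  unfolding Hm_def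
  by (elim exE conjE, rule_tac x="W \<inter> Wa" in exI) (auto intro!: holomorphic_intros tendsto_add_zero elim: holomorphic_on_subset)
lemma Hm_mult: "Hm f \<Longrightarrow> Hm g \<Longrightarrow> Hm (\<lambda>z. f z * g z)"
  unfolding Hm_def
  by (elim exE conjE, rule_tac x="W \<inter> Wa" in exI) (auto intro!: holomorphic_intros tendsto_mult_zero elim: holomorphic_on_subset)
lemma Hm_uminus: "Hm f \<Longrightarrow> Hm (\<lambda>z. - f z)"
  unfolding Hm_def by (auto intro!: holomorphic_intros tendsto_minus_cancel_left[THEN iffD1] simp: tendsto_minus_cancel_left)

lemma H_add: "inH m c r f \<Longrightarrow> inH m c r g \<Longrightarrow> inH m c r (\<lambda>z. f z + g z)"
  unfolding inH_def
  by (elim exE conjE, rule_tac x="U \<inter> Ua" in exI) (auto intro!: holomorphic_intros elim: holomorphic_on_subset)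
lemma H_diff: "inH m c r f \<Longrightarrow> inH m c r g \<Longrightarrow> inH m c r (\<lambda>z. f z - g z)"
  unfolding inH_def
  by (elim exE conjE, rule_tac x="U \<inter> Ua" in exI) (auto intro!: holomorphic_intros elim: holomorphic_on_subset)
lemma H_mult: "inH m c r f \<Longrightarrow> inH m c r g \<Longrightarrow> inH m c r (\<lambda>z. f z * g z)"
  unfolding inH_def
  by (elim exE conjE, rule_tac x="U \<inter> Ua" in exI) (auto intro!: holomorphic_intros elim: holomorphic_on_subset)

lemma PQ_basic:
  assumes "inH m c r f"
  shows "Hp (proj_plus m c r f)" "Hm (proj_minus m c r f)"
    "\<forall>\<^sub>F z in gF. proj_plus m c r f z + proj_minus m c r f z = f z"
proof -
  obtain U where U: "open U" "Gam m c r \<subseteq> U" "f holomorphic_on U" using assms unfolding inH_def by blast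
  from ext[OF U] obtain W1 W2 V where *: "open W1 \<and> (\<Union>j\<in>{1..m}. cball (c j) (r j)) \<subseteq> W1 \<and> proj_plus m c r f holomorphic_on W1 \<and>
     open W2 \<and> - Dint m c r \<subseteq> W2 \<and> proj_minus m c r f holomorphic_on W2 \<and>
     (proj_minus m c r f \<longlongrightarrow> 0) at_infinity \<and>
     open V \<and> Gam m c r \<subseteq> V \<and> V \<subseteq> U \<and> (\<forall>z\<in>V. proj_plus m c r f z + proj_minus m c r f z = f z)"
    by blast
  show "Hp (proj_plus m c r f)" "Hm (proj_minus m c r f)" unfolding Hp_def Hm_def using * by blast+
  show "\<forall>\<^sub>F z in gF. proj_plus m c r f z + proj_minus m c r f z = f z" unfolding ev_gF using * by blast
qed

lemma P_H: "inH m c r f \<Longrightarrow> inH m c r (proj_plus m c r f)" using PQ_basic Hp_H by blast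
lemma Q_H: "inH m c r f \<Longrightarrow> inH m c r (proj_minus m c r f)" using PQ_basic Hm_H by blast

lemma uniq:
  assumes f: "inH m c r f" and g1: "Hp g1" and g2: "Hm g2"
    and eq: "\<forall>\<^sub>F z in gF. f z = g1 z + g2 z"
  shows "\<forall>\<^sub>F z in gF. proj_plus m c r f z = g1 z" "\<forall>\<^sub>F z in gF. proj_minus m c r f z = g2 z"
proof -
  let ?P = "proj_plus m c r f" and ?Q = "proj_minus m c r f"
  obtain W1 where W1: "open W1" "(\<Union>j\<in>{1..m}. cball (c j) (r j)) \<subseteq> W1" "?P holomorphic_on W1"
    using PQ_basic(1)[OF f] unfolding Hp_def by blast
  obtain W2 where W2: "open W2" "- Dint m c r \<subseteq> W2" "?Q holomorphic_on W2" "(?Q \<longlongrightarrow> 0) at_infinity"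
    using PQ_basic(2)[OF f] unfolding Hm_def by blast
  obtain W1' where W1': "open W1'" "(\<Union>j\<in>{1..m}. cball (c j) (r j)) \<subseteq> W1'" "g1 holomorphic_on W1'"
    using g1 unfolding Hp_def by blast
  obtain W2' where W2': "open W2'" "- Dint m c r \<subseteq> W2'" "g2 holomorphic_on W2'" "(g2 \<longlongrightarrow> 0) at_infinity"
    using g2 unfolding Hm_def by blast
  have "\<forall>\<^sub>F z in gF. ?P z + ?Q z = g1 z + g2 z"
    using PQ_basic(3)[OF f] eq by eventually_elim simp
  then obtain V where V: "open V" "Gam m c r \<subseteq> V" "\<forall>z\<in>V. ?P z + ?Q z = g1 z + g2 z"
    unfolding ev_gF by blast
  define V0 where "V0 = V \<inter> W1 \<inter> W1' \<inter> W2 \<inter> W2'"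
  have V0: "open V0" "Gam m c r \<subseteq> V0" unfolding V0_def using V W1 W1' W2 W2' Gam_CB Gam_Dint by auto
  have V0eq: "?P z - g1 z = g2 z - ?Q z" if "z \<in> V0" for z
    using V(3) that unfolding V0_def by (auto simp: algebra_simps)
  define k where "k = (\<lambda>z. if z \<in> Dint m c r \<union> V0 then ?P z - g1 z else g2 z - ?Q z)"
  have DintCB: "Dint m c r \<subseteq> (\<Union>j\<in>{1..m}. cball (c j) (r j))" unfolding Dint_def by auto
  have DextD: "Dext m c r \<subseteq> - Dint m c r" unfolding Dext_def Dint_def using ball_subset_cball by blast
  have k2: "k z = g2 z - ?Q z" if "z \<in> Dext m c r \<union> V0" for z
    using that V0eq DextD unfolding k_def by auto
  have kdiff: "k field_differentiable at z" for z
  proof (cases "z \<in> Dint m c r \<union> V0")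
    case True
    show ?thesis
    proof (rule fd_transform[OF _ _ True])
      show "open (Dint m c r \<union> V0)" using open_Dint V0 by auto
      show "(\<lambda>w. ?P w - g1 w) holomorphic_on Dint m c r \<union> V0"
      proof -
        have sub: "Dint m c r \<union> V0 \<subseteq> W1 \<inter> W1'" using W1 W1' DintCB unfolding V0_def by blast
        show ?thesis using holomorphic_on_subset[OF W1(3)] holomorphic_on_subset[OF W1'(3)] sub
          by (intro holomorphic_on_diff) auto
      qed
      show "k w = ?P w - g1 w" if "w \<in> Dint m c r \<union> V0" for w using that unfolding k_def by simp
    qed
  next
    case False
    have "z \<notin> cball (c j) (r j)" if j: "j \<in> {1..m}" for j
    proof
      assume "z \<in> cball (c j) (r j)"
      then have "z \<in> ball (c j) (r j) \<or> z \<in> sphere (c j) (r j)" by (auto simp: le_less)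
      then show False using False V0(2) j unfolding Dint_def Gam_def by blast
    qed
    then have zE: "z \<in> Dext m c r" unfolding Dext_def by blast
    show ?thesis
    proof (rule fd_transform[of "\<lambda>w. g2 w - ?Q w" "Dext m c r \<union> V0"])
      show "open (Dext m c r \<union> V0)" using open_Dext V0 by auto
      show "(\<lambda>w. g2 w - ?Q w) holomorphic_on Dext m c r \<union> V0"
      proof -
        have sub: "Dext m c r \<union> V0 \<subseteq> W2 \<inter> W2'" using W2 W2' DextD unfolding V0_def by blast
        show ?thesis using holomorphic_on_subset[OF W2(3)] holomorphic_on_subset[OF W2'(3)] sub
          by (intro holomorphic_on_diff) auto
      qed
    qed (use zE k2 in auto)
  qed
  have khol: "k holomorphic_on UNIV"
    using kdiff by (simp add: holomorphic_on_open field_differentiable_def)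
  have "((\<lambda>z. g2 z - ?Q z) \<longlongrightarrow> 0 - 0) at_infinity" by (intro tendsto_diff W2'(4) W2(4))
  then have klim: "(k \<longlongrightarrow> 0) at_infinity"
    using Lim_transform_eventually[of _ _ _ k] ev_Dext k2 
    by (smt (verit, ccfv_threshold) UnCI diff_self eventually_mono)
  have k0: "k z = 0" for z using Liouville_weak[OF khol klim] .
  have "\<forall>z\<in>V0. ?P z = g1 z \<and> ?Q z = g2 z"
  proof
    fix z assume z: "z \<in> V0"
    then have "k z = ?P z - g1 z" unfolding k_def by simp
    then show "?P z = g1 z \<and> ?Q z = g2 z" using k0[of z] V0eq[OF z] by simp
  qed
  then show "\<forall>\<^sub>F z in gF. ?P z = g1 z" "\<forall>\<^sub>F z in gF. ?Q z = g2 z"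
    unfolding ev_gF using V0 by blast+
qed

end

context circ begin

lemma H_uminus: "inH m c r f \<Longrightarrow> inH m c r (\<lambda>z. - f z)"
  unfolding inH_def by (auto intro!: holomorphic_intros)
lemma Hp_diff: "Hp f \<Longrightarrow> Hp g \<Longrightarrow> Hp (\<lambda>z. f z - g z)"
  using Hp_add[OF _ Hp_uminus, of f g] by simp
lemma Hm_diff: "Hm f \<Longrightarrow> Hm g \<Longrightarrow> Hm (\<lambda>z. f z - g z)"
  using Hm_add[OF _ Hm_uminus, of f g] by simp

lemma CI_resp:
  assumes "\<forall>z\<in>Gam m c r. f z = g z"
  shows "CI m c r f = CI m c r g"
proof
  fix z
  have "contour_integral (circlepath (c t) (r t)) (\<lambda>p. f p / (p - z)) =
        contour_integral (circlepath (c t) (r t)) (\<lambda>p. g p / (p - z))" if t: "t \<in> {1..m}" for t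
  proof (rule contour_integral_eq)
    fix p assume "p \<in> path_image (circlepath (c t) (r t))"
    moreover have "r t > 0" using t rpos by auto
    ultimately have "p \<in> Gam m c r" using t unfolding Gam_def by auto
    then show "f p / (p - z) = g p / (p - z)" using assms by simp
  qed
  then show "CI m c r f z = CI m c r g z" unfolding CI_def by simp
qed

lemma P_resp:
  assumes "\<forall>\<^sub>F z in gF. f z = g z"
  shows "\<forall>\<^sub>F z in gF. proj_plus m c r f z = proj_plus m c r g z \<and> proj_minus m c r f z = proj_minus m c r g z"
proof -
  obtain U where U: "open U" "Gam m c r \<subseteq> U" "\<forall>z\<in>U. f z = g z" using assms unfolding ev_gF by blast
  have CI: "CI m c r f = CI m c r g" using U by (intro CI_resp) blast
  show ?thesis unfolding ev_gF
    by (rule exI[of _ U]) (use U CI in \<open>auto simp: proj_plus_def proj_minus_def\<close>)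
qed

lemma lin:
  assumes "inH m c r f" "inH m c r g"
  shows "\<forall>\<^sub>F z in gF. proj_plus m c r (\<lambda>z. f z + g z) z = proj_plus m c r f z + proj_plus m c r g z \<and>
                      proj_minus m c r (\<lambda>z. f z + g z) z = proj_minus m c r f z + proj_minus m c r g z"
proof -
  have eq: "\<forall>\<^sub>F z in gF. f z + g z = (proj_plus m c r f z + proj_plus m c r g z) + (proj_minus m c r f z + proj_minus m c r g z)"
    using PQ_basic(3)[OF assms(1)] PQ_basic(3)[OF assms(2)] by eventually_elim (simp add: algebra_simps)
  note u = uniq[OF H_add[OF assms] Hp_add[OF PQ_basic(1)[OF assms(1)] PQ_basic(1)[OF assms(2)]]
                   Hm_add[OF PQ_basic(2)[OF assms(1)] PQ_basic(2)[OF assms(2)]] eq]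
  show ?thesis using u(1) u(2) by eventually_elim simp
qed

end

theorem corollary2p8:
  fixes m :: nat and n :: "nat \<Rightarrow> nat" and d :: "nat \<Rightarrow> int"
    and c :: "nat \<Rightarrow> complex" and r :: "nat \<Rightarrow> real"
    and a ah :: "complex \<Rightarrow> complex"
    and \<xi> \<omega>1 \<omega> :: "(complex \<Rightarrow> complex) \<times> (complex \<Rightarrow> complex)"
  assumes "m \<ge> 1"
    and "\<forall>j\<in>{0..m}. n j > 0"
    and "\<forall>j\<in>{1..m}. d j \<noteq> 0"
    and "\<forall>j\<in>{1..m}. r j > 0"
    and "\<forall>i\<in>{1..m}. \<forall>j\<in>{1..m}. i \<noteq> j \<longrightarrow> cball (c i) (r i) \<inter> cball (c j) (r j) = {}"
    and "inM m n d c r a ah"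
    and "inH m c r (fst \<omega>1)" and "inH m c r (snd \<omega>1)"
    and "germ_eq2 m c r \<xi> (eta m c r a ah \<omega>1)"
    and "inH m c r (fst \<omega>)" and "inH m c r (snd \<omega>)"
  shows "germ_eq2 m c r (Cxi m c r a ah \<xi> \<omega>) (eta m c r a ah (prodH m c r a ah \<omega>1 \<omega>))"
proof -
  interpret circ m c r using assms(4,5) by unfold_locales
  obtain u uh where om1: "\<omega>1 = (u, uh)" by (cases \<omega>1)
  obtain w wh where om: "\<omega> = (w, wh)" by (cases \<omega>)
  obtain x xh where xi: "\<xi> = (x, xh)" by (cases \<xi>)
  define A where "A = deriv a"
  define Ah where "Ah = deriv ah"
  let ?P = "proj_plus m c r" and ?Q = "proj_minus m c r"
  have Hu: "inH m c r u" "inH m c r uh" using assms(7,8) om1 by auto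
  have Hw: "inH m c r w" "inH m c r wh" using assms(10,11) om by auto
  have HA: "inH m c r A"
  proof -
    have "\<exists>U. open U \<and> - Dint m c r \<subseteq> U \<and> a holomorphic_on U"
      using assms(6) unfolding inM_def by (rule conjunct1)
    then obtain U where U: "open U" "- Dint m c r \<subseteq> U" "a holomorphic_on U" by (elim exE conjE)
    have "A holomorphic_on U" unfolding A_def using U by (intro holomorphic_deriv) auto
    then show ?thesis unfolding inH_def using U Gam_Dint by blast
  qed
  have HAh: "inH m c r Ah"
  proof -
    have "\<exists>\<phi>. (\<forall>j\<in>{1..m}. \<phi> j \<in> ball (c j) (r j)) \<and>
        (\<exists>U. open U \<and> (\<Union>j\<in>{1..m}. cball (c j) (r j)) \<subseteq> U \<and>
             ah holomorphic_on (U - \<phi> ` {1..m})) \<and>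
        (\<forall>j\<in>{1..m}. \<exists>h e. e > 0 \<and> h holomorphic_on ball (\<phi> j) e \<and> h (\<phi> j) \<noteq> 0 \<and>
             (\<forall>z\<in>ball (\<phi> j) e - {\<phi> j}. ah z = h z / (z - \<phi> j) ^ n j))"
      using assms(6) unfolding inM_def by (elim conjE)
    then obtain \<phi> U where \<phi>: "\<forall>j\<in>{1..m}. \<phi> j \<in> ball (c j) (r j)" and U: "open U" "(\<Union>j\<in>{1..m}. cball (c j) (r j)) \<subseteq> U"
      "ah holomorphic_on (U - \<phi> ` {1..m})" by (elim exE conjE)
    have op: "open (U - \<phi> ` {1..m})" using U by (intro open_Diff finite_imp_closed) auto
    have "Ah holomorphic_on (U - \<phi> ` {1..m})" unfolding Ah_def using U op by (intro holomorphic_deriv) auto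
    moreover have "Gam m c r \<subseteq> U - \<phi> ` {1..m}"
    proof
      fix z assume z: "z \<in> Gam m c r"
      have "z \<notin> \<phi> ` {1..m}"
      proof
        assume "z \<in> \<phi> ` {1..m}"
        then have "z \<in> Dint m c r" using \<phi> unfolding Dint_def by auto
        then show False using Gam_Dint z by blast
      qed
      then show "z \<in> U - \<phi> ` {1..m}" using z Gam_CB U(2) by blast
    qed
    ultimately show ?thesis unfolding inH_def using op by blast
  qed
  have Ha: "inH m c r (\<lambda>p. u p * A p)" "inH m c r (\<lambda>p. uh p * Ah p)"
       "inH m c r (\<lambda>p. w p * A p)" "inH m c r (\<lambda>p. wh p * Ah p)"
    using H_mult[OF Hu(1) HA] H_mult[OF Hu(2) HAh] H_mult[OF Hw(1) HA] H_mult[OF Hw(2) HAh] by auto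
  have HS1: "inH m c r (\<lambda>z. u z + uh z)" using H_add[OF Hu] by simp
  have HT1: "inH m c r (\<lambda>z. u z * A z + uh z * Ah z)" using H_add[OF Ha(1,2)] by simp
  have HTw: "inH m c r (\<lambda>z. w z * A z + wh z * Ah z)" using H_add[OF Ha(3,4)] by simp
  define x' where "x' = (\<lambda>z. A z * ?Q (\<lambda>z. u z + uh z) z - ?Q (\<lambda>z. u z * A z + uh z * Ah z) z)"
  define xh' where "xh' = (\<lambda>z. - Ah z * ?P (\<lambda>z. u z + uh z) z + ?P (\<lambda>z. u z * A z + uh z * Ah z) z)"
  have eta1: "eta m c r a ah \<omega>1 = (x', xh')"
    by (simp add: eta_def om1 x'_def xh'_def A_def Ah_def Let_def)
  define v where "v = (\<lambda>z. w z * ?P (\<lambda>p. u p * A p) z - u z * ?Q (\<lambda>p. w p * A p) z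
              - w z * ?Q (\<lambda>p. uh p * Ah p) z - u z * ?Q (\<lambda>p. wh p * Ah p) z)"
  define vh where "vh = (\<lambda>z. wh z * ?P (\<lambda>p. uh p * Ah p) z - uh z * ?Q (\<lambda>p. wh p * Ah p) z
              + uh z * ?P (\<lambda>p. w p * A p) z + wh z * ?P (\<lambda>p. u p * A p) z)"
  have prod: "prodH m c r a ah \<omega>1 (w, wh) = (v, vh)"
    by (simp add: prodH_def om1 om v_def vh_def A_def Ah_def Let_def)
  have Hx': "inH m c r x'" unfolding x'_def
    by (intro H_diff H_mult HA Q_H HS1 HT1)
  have Hxh': "inH m c r xh'" unfolding xh'_def
    by (intro H_add H_mult H_uminus HAh P_H HS1 HT1)
  have Hv: "inH m c r v" unfolding v_def
    by (intro H_diff H_mult H_add Hu Hw P_H Q_H Ha)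
  have Hvh: "inH m c r vh" unfolding vh_def
    by (intro H_diff H_mult H_add Hu Hw P_H Q_H Ha)
  have HS: "inH m c r (\<lambda>z. v z + vh z)" by (intro H_add Hv Hvh)
  have HK: "inH m c r (\<lambda>z. v z * A z + vh z * Ah z)" by (intro H_add H_mult Hv Hvh HA HAh)
  have Hs': "inH m c r (\<lambda>z. w z * x' z + wh z * xh' z)" by (intro H_add H_mult Hw Hx' Hxh')
  have HR: "inH m c r (\<lambda>z. (w z * x' z + wh z * xh' z) - (v z + vh z))" by (intro H_diff Hs' HS)
  have hx: "\<forall>\<^sub>F z in gF. x z = x' z \<and> xh z = xh' z"
    using assms(9) unfolding germ_eq2_def xi eta1 germ_iff fst_conv snd_conv by (simp add: eventually_conj_iff)
  have e1: "\<forall>\<^sub>F z in gF. ?P (\<lambda>z. w z * x z + wh z * xh z) z = ?P (\<lambda>z. w z * x' z + wh z * xh' z) z \<and>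
                       ?Q (\<lambda>z. w z * x z + wh z * xh z) z = ?Q (\<lambda>z. w z * x' z + wh z * xh' z) z"
    by (rule P_resp) (use hx in \<open>eventually_elim, simp\<close>)
  have e2: "\<forall>\<^sub>F z in gF. ?P (\<lambda>z. w z * x' z + wh z * xh' z) z = ?P (\<lambda>z. (w z * x' z + wh z * xh' z) - (v z + vh z)) z + ?P (\<lambda>z. v z + vh z) z \<and>
                       ?Q (\<lambda>z. w z * x' z + wh z * xh' z) z = ?Q (\<lambda>z. (w z * x' z + wh z * xh' z) - (v z + vh z)) z + ?Q (\<lambda>z. v z + vh z) z"
  proof -
    have "(\<lambda>z. ((w z * x' z + wh z * xh' z) - (v z + vh z)) + (v z + vh z)) = (\<lambda>z. w z * x' z + wh z * xh' z)"
      by (simp add: fun_eq_iff)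
    then show ?thesis using lin[OF HR HS] by simp
  qed
  have dec: "\<forall>\<^sub>F z in gF. ?P (\<lambda>p. u p * A p) z + ?Q (\<lambda>p. u p * A p) z = u z * A z \<and>
                        ?P (\<lambda>p. uh p * Ah p) z + ?Q (\<lambda>p. uh p * Ah p) z = uh z * Ah z \<and>
                        ?P (\<lambda>p. w p * A p) z + ?Q (\<lambda>p. w p * A p) z = w z * A z \<and>
                        ?P (\<lambda>p. wh p * Ah p) z + ?Q (\<lambda>p. wh p * Ah p) z = wh z * Ah z \<and>
                        ?P (\<lambda>z. u z + uh z) z + ?Q (\<lambda>z. u z + uh z) z = u z + uh z"
    using PQ_basic(3)[OF Ha(1)] PQ_basic(3)[OF Ha(2)] PQ_basic(3)[OF Ha(3)] PQ_basic(3)[OF Ha(4)] PQ_basic(3)[OF HS1]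
    by eventually_elim simp
  have linT1: "\<forall>\<^sub>F z in gF. ?P (\<lambda>z. u z * A z + uh z * Ah z) z = ?P (\<lambda>p. u p * A p) z + ?P (\<lambda>p. uh p * Ah p) z \<and>
                          ?Q (\<lambda>z. u z * A z + uh z * Ah z) z = ?Q (\<lambda>p. u p * A p) z + ?Q (\<lambda>p. uh p * Ah p) z"
    using lin[OF Ha(1,2)] by simp
  have linTw: "\<forall>\<^sub>F z in gF. ?P (\<lambda>z. w z * A z + wh z * Ah z) z = ?P (\<lambda>p. w p * A p) z + ?P (\<lambda>p. wh p * Ah p) z \<and>
                          ?Q (\<lambda>z. w z * A z + wh z * Ah z) z = ?Q (\<lambda>p. w p * A p) z + ?Q (\<lambda>p. wh p * Ah p) z"
    using lin[OF Ha(3,4)] by simp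
  let ?g1 = "\<lambda>z. - (?P (\<lambda>z. u z + uh z) z * ?P (\<lambda>p. w p * A p) z) - ?P (\<lambda>p. wh p * Ah p) z * ?P (\<lambda>z. u z + uh z) z"
  let ?g2 = "\<lambda>z. ?Q (\<lambda>p. w p * A p) z * ?Q (\<lambda>z. u z + uh z) z + ?Q (\<lambda>z. u z + uh z) z * ?Q (\<lambda>p. wh p * Ah p) z"
  have Hg1: "Hp ?g1" by (intro Hp_diff Hp_uminus Hp_mult PQ_basic(1) HS1 Ha)
  have Hg2: "Hm ?g2" by (intro Hm_add Hm_mult PQ_basic(2) HS1 Ha)
  have Req: "\<forall>\<^sub>F z in gF. (w z * x' z + wh z * xh' z) - (v z + vh z) = ?g1 z + ?g2 z"
    using dec linT1
  proof eventually_elim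
    case (elim z)
    have q: "?Q (\<lambda>p. u p * A p) z = u z * A z - ?P (\<lambda>p. u p * A p) z"
            "?Q (\<lambda>p. uh p * Ah p) z = uh z * Ah z - ?P (\<lambda>p. uh p * Ah p) z"
            "?Q (\<lambda>p. w p * A p) z = w z * A z - ?P (\<lambda>p. w p * A p) z"
            "?Q (\<lambda>p. wh p * Ah p) z = wh z * Ah z - ?P (\<lambda>p. wh p * Ah p) z"
            "?Q (\<lambda>z. u z + uh z) z = u z + uh z - ?P (\<lambda>z. u z + uh z) z"
      using elim by (simp_all add: eq_diff_eq add.commute)
    have l: "?P (\<lambda>z. u z * A z + uh z * Ah z) z = ?P (\<lambda>p. u p * A p) z + ?P (\<lambda>p. uh p * Ah p) z"
            "?Q (\<lambda>z. u z * A z + uh z * Ah z) z = ?Q (\<lambda>p. u p * A p) z + ?Q (\<lambda>p. uh p * Ah p) z"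
      using elim by simp_all
    show ?case unfolding x'_def xh'_def v_def vh_def l q
      by (simp add: algebra_simps)
  qed
  note eR = uniq[OF HR Hg1 Hg2 Req]
  let ?k1 = "\<lambda>z. ?P (\<lambda>p. w p * A p) z * ?P (\<lambda>p. u p * A p) z + ?P (\<lambda>p. uh p * Ah p) z * ?P (\<lambda>p. w p * A p) z
              + ?P (\<lambda>p. wh p * Ah p) z * (?P (\<lambda>p. u p * A p) z + ?P (\<lambda>p. uh p * Ah p) z)"
  let ?k2 = "\<lambda>z. - (?Q (\<lambda>p. u p * A p) z * ?Q (\<lambda>p. w p * A p) z) - ?Q (\<lambda>p. w p * A p) z * ?Q (\<lambda>p. uh p * Ah p) z
              - (?Q (\<lambda>p. u p * A p) z + ?Q (\<lambda>p. uh p * Ah p) z) * ?Q (\<lambda>p. wh p * Ah p) z"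
  have Hk1: "Hp ?k1" by (intro Hp_add Hp_mult PQ_basic(1) Ha)
  have Hk2: "Hm ?k2" by (intro Hm_diff Hm_uminus Hm_add Hm_mult PQ_basic(2) Ha)
  have Keq: "\<forall>\<^sub>F z in gF. v z * A z + vh z * Ah z = ?k1 z + ?k2 z"
    using dec
  proof eventually_elim
    case (elim z)
    have q: "?Q (\<lambda>p. u p * A p) z = u z * A z - ?P (\<lambda>p. u p * A p) z"
            "?Q (\<lambda>p. uh p * Ah p) z = uh z * Ah z - ?P (\<lambda>p. uh p * Ah p) z"
            "?Q (\<lambda>p. w p * A p) z = w z * A z - ?P (\<lambda>p. w p * A p) z"
            "?Q (\<lambda>p. wh p * Ah p) z = wh z * Ah z - ?P (\<lambda>p. wh p * Ah p) z"
      using elim by (simp_all add: eq_diff_eq add.commute)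
    show ?case unfolding v_def vh_def q
      by (simp add: algebra_simps)
  qed
  note eK = uniq[OF HK Hk1 Hk2 Keq]
  let ?s = "\<lambda>z. w z * x z + wh z * xh z" and ?s' = "\<lambda>z. w z * x' z + wh z * xh' z"
    and ?R = "\<lambda>z. (w z * x' z + wh z * xh' z) - (v z + vh z)" and ?S = "\<lambda>z. v z + vh z"
    and ?K = "\<lambda>z. v z * A z + vh z * Ah z" and ?Tw = "\<lambda>z. w z * A z + wh z * Ah z"
    and ?T1 = "\<lambda>z. u z * A z + uh z * Ah z"
  show ?thesis
    unfolding germ_eq2_def prod xi om Cxi_def eta_def Let_def fst_conv snd_conv A_def[symmetric] Ah_def[symmetric] germ_iff
  proof
    show "\<forall>\<^sub>F z in gF. A z * ?Q ?s z - x z * ?Q ?Tw z = A z * ?Q ?S z - ?Q ?K z"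
      using hx e1 e2 eR(2) eK(2) linTw linT1
    proof eventually_elim
      case (elim z)
      have h1: "x z = x' z" using elim by blast
      have h2: "?Q ?s z = ?Q ?s' z" using elim by blast
      have h3: "?Q ?s' z = ?Q ?R z + ?Q ?S z" using elim by blast
      have h4: "?Q ?R z = ?g2 z" using elim by blast
      have h5: "?Q ?K z = ?k2 z" using elim by blast
      have h6: "?Q ?Tw z = ?Q (\<lambda>p. w p * A p) z + ?Q (\<lambda>p. wh p * Ah p) z" using elim by blast
      have h7: "?Q ?T1 z = ?Q (\<lambda>p. u p * A p) z + ?Q (\<lambda>p. uh p * Ah p) z" using elim by blast
      have h8: "x' z = A z * ?Q (\<lambda>z. u z + uh z) z - ?Q ?T1 z" by (simp add: x'_def)
      show ?case unfolding h1 h2 h3 h4 h5 h6 h8 h7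
        by (simp add: algebra_simps)
    qed
    show "\<forall>\<^sub>F z in gF. - Ah z * ?P ?s z + xh z * ?P ?Tw z = - Ah z * ?P ?S z + ?P ?K z"
      using hx e1 e2 eR(1) eK(1) linTw linT1
    proof eventually_elim
      case (elim z)
      have h1: "xh z = xh' z" using elim by blast
      have h2: "?P ?s z = ?P ?s' z" using elim by blast
      have h3: "?P ?s' z = ?P ?R z + ?P ?S z" using elim by blast
      have h4: "?P ?R z = ?g1 z" using elim by blast
      have h5: "?P ?K z = ?k1 z" using elim by blast
      have h6: "?P ?Tw z = ?P (\<lambda>p. w p * A p) z + ?P (\<lambda>p. wh p * Ah p) z" using elim by blast
      have h7: "?P ?T1 z = ?P (\<lambda>p. u p * A p) z + ?P (\<lambda>p. uh p * Ah p) z" using elim by blast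
      have h8: "xh' z = - Ah z * ?P (\<lambda>z. u z + uh z) z + ?P ?T1 z" by (simp add: xh'_def)
      show ?case unfolding h1 h2 h3 h4 h5 h6 h8 h7
        by (simp add: algebra_simps)
    qed
  qed
qed


end
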